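(* Let $((\mathcal G,\Theta),\mathfrak g_1,\mathfrak g_2)$ be a twilled Lie triple system and $H:\mathfrak g_2\to\mathfrak g_1$ a linear map. Then the twisting $((\mathcal G,\Theta^H),\mathfrak g_1,\mathfrak g_2)$ is also a twilled Lie triple system (i.e. $\mathfrak g_1$ and $\mathfrak g_2$ are subalgebras for the bracket $\Theta^H$) if and only if $H\in C^0_{\mathsf{LTS}}(\mathfrak g_2,\mathfrak g_1)$ is a Maurer–Cartan element of the $L_\infty$-algebra $(C^*_{\mathsf{LTS}}(\mathfrak g_2,\mathfrak g_1),l_1,l_2,l_3)$, i.e. $$l_1(H)+\tfrac12 l_2(H,H)+\tfrac1{3!}l_3(H,H,H)=0,$$ where $l_1(f)=[\hat\mu_2,\hat f]_{\mathsf{LTS}}$, $l_2(f,g)=[[\hat\psi,\hat f]_{\mathsf{LTS}},\hat g]_{\mathsf{LTS}}$, $l_3(f,g,h)=[[[\hat\mu_1,\hat f]_{\mathsf{LTS}},\hat g]_{\mathsf{LTS}},\hat h]_{\mathsf{LTS}}$.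
   Context: All vector spaces are over a field $\mathbb K$ of characteristic $0$. A Lie triple system is a vector space with a trilinear bracket $[\cdot,\cdot,\cdot]$ satisfying $[x,x,y]=0$, $[x,y,z]+[y,z,x]+[z,x,y]=0$ and $[x,y,[z,w,t]]=[[x,y,z],w,t]+[z,[x,y,w],t]+[z,w,[x,y,t]]$; a subalgebra is a subspace closed under the bracket. Cochains: $C^p(\mathfrak g,\mathfrak g)=\mathrm{Hom}(\otimes^{2p+1}\mathfrak g,\mathfrak g)$ (degree $p$), arguments written $(\mathfrak X_1,\dots,\mathfrak X_p,x)$, $\mathfrak X_i=x_i\otimes y_i$. For $P\in C^p,Q\in C^q$: $(P\circ Q)(\mathfrak X_1,\dots,\mathfrak X_{p+q},x)=\sum_{k=1}^p(-1)^{(k-1)q}\sum_{\sigma\in\mathbb S(k-1,q)}(-1)^\sigma P(\mathfrak X_{\sigma(1)},\dots,\mathfrak X_{\sigma(k-1)},Q(\mathfrak X_{\sigma(k)},\dots,\mathfrak X_{\sigma(k+q-1)},x_{k+q})\otimes y_{k+q},\mathfrak X_{k+q+1},\dots,\mathfrak X_{p+q},x)+\sum_{k=1}^p(-1)^{(k-1)q}\sum_{\sigma\in\mathbb S(k-1,q)}(-1)^\sigma P(\mathfrak X_{\sigma(1)},\dots,\mathfrak X_{\sigma(k-1)},x_{k+q}\otimes Q(\mathfrak X_{\sigma(k)},\dots,\mathfrak X_{\sigma(k+q-1)},y_{k+q}),\mathfrak X_{k+q+1},\dots,\mathfrak X_{p+q},x)+\sum_{\sigma\in\mathbb S(p,q)}(-1)^\sigma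 P(\mathfrak X_{\sigma(1)},\dots,\mathfrak X_{\sigma(p)},Q(\mathfrak X_{\sigma(p+1)},\dots,\mathfrak X_{\sigma(p+q)},x))$ ($\mathbb S(i,j)$ = shuffles), $[P,Q]=P\circ Q-(-1)^{pq}Q\circ P$. $C^p_{\mathsf{LTS}}$ is the subspace of $P$ with $P(\dots,x,x,y)=0$ and vanishing cyclic sum in the last three arguments ($C^0_{\mathsf{LTS}}=\mathrm{Hom}(\mathfrak g,\mathfrak g)$), a graded Lie subalgebra with bracket $[\cdot,\cdot]_{\mathsf{LTS}}$; $\Theta\in C^1_{\mathsf{LTS}}$ is a Lie triple system bracket iff $[\Theta,\Theta]_{\mathsf{LTS}}=0$. $C^p_{\mathsf{LTS}}(\mathfrak g_2,\mathfrak g_1)$: maps $\otimes^{2p+1}\mathfrak g_2\to\mathfrak g_1$ with the same symmetries; its lift $\hat f$ to $\mathcal G=\mathfrak g_1\oplus\mathfrak g_2$ equals $f$ on $\otimes^{2p+1}\mathfrak g_2$ and vanishes on all other tensor summands; e.g. for $H:\mathfrak g_2\to\mathfrak g_1$, $\hat H(x,u)=(H(u),0)$. Twilled Lie triple system: Lie triple system $(\mathcal G,\Theta=[\cdot,\cdot,\cdot]_{\mathcal G})$, $\mathcal G=\mathfrak g_1\oplus\mathfrak g_2$, with $\mathfrak g_1,\mathfrak g_2$ subalgebras. With $[a,b,c]_i$ the $\mathfrak g_i$-component and $x,y,z\in\mathfrak g_1$, $u,v,w\in\mathfrak g_2$: $\hat\mu_1((x,u),(y,v),(z,w))=([x,y,z]_1,[x,y,w]_2+[u,y,z]_2-[v,x,z]_2)$,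 $\hat\psi((x,u),(y,v),(z,w))=([x,y,w]_1+[u,y,z]_1-[v,x,z]_1,[u,v,z]_2+[x,v,w]_2-[y,u,w]_2)$, $\hat\mu_2((x,u),(y,v),(z,w))=([u,v,z]_1+[x,v,w]_1-[y,u,w]_1,[u,v,w]_2)$. Twisting: $X_{\hat H}(\cdot)=[\cdot,\hat H]_{\mathsf{LTS}}$ and $\Theta^H=\sum_{k\ge0}\frac1{k!}X_{\hat H}^k(\Theta)$ (a finite sum). $L_\infty$-algebra: graded space with graded-symmetric degree $+1$ maps $l_k$ satisfying the generalized Jacobi identities; here $C^p_{\mathsf{LTS}}(\mathfrak g_2,\mathfrak g_1)$ has degree $p$, $l_k=0$ for $k\ge4$, and the values of $l_1,l_2,l_3$ (lifts of maps $\otimes^\bullet\mathfrak g_2\to\mathfrak g_1$) are identified with elements of $C^*_{\mathsf{LTS}}(\mathfrak g_2,\mathfrak g_1)$. A Maurer–Cartan element is a degree-$0$ element $\alpha$ with $\sum_k\frac1{k!}l_k(\alpha,\dots,\alpha)=0$. *)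

theory Defs
  imports Complex_Main "HOL-Library.Product_Plus"
begin

text \<open>A cochain of degree p in C^p(g,g) = Hom(tensor^(2p+1) g, g) is represented by its
values on elementary tensors: a function taking the list of pairs
[X_1,...,X_p] (X_i = x_i tensor y_i, stored as (x_i,y_i)) and the last argument x.
Only lists of length p are meaningful.\<close>

type_synonym 'g cochain = "('g \<times> 'g) list \<Rightarrow> 'g \<Rightarrow> 'g"

text \<open>(i,j)-shuffles of positions 0..i+j-1 (0-indexed): a shuffle sigma is determined by
the set S of values sigma(1..i); sigma(1..i) lists S increasingly, sigma(i+1..i+j)
lists the complement increasingly.\<close>

definition shuffles :: "nat \<Rightarrow> nat \<Rightarrow> nat set set" where
  "shuffles i j = {S. S \<subseteq> {0..<i+j} \<and> card S = i}"

text \<open>Number of inversions of the shuffle permutation (its sign is (-1)^this).\<close>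
definition shuffle_inv :: "nat \<Rightarrow> nat set \<Rightarrow> nat" where
  "shuffle_inv n S = card {(a,b). a \<in> S \<and> b \<in> {0..<n} - S \<and> b < a}"

definition sgn_act :: "nat \<Rightarrow> 'g::ab_group_add \<Rightarrow> 'g" where
  "sgn_act m v = (if even m then v else - v)"

definition shuf_first :: "('g \<times> 'g) list \<Rightarrow> nat set \<Rightarrow> ('g \<times> 'g) list" where
  "shuf_first Xs S = map (nth Xs) (sorted_list_of_set S)"

definition shuf_second :: "nat \<Rightarrow> ('g \<times> 'g) list \<Rightarrow> nat set \<Rightarrow> ('g \<times> 'g) list" where
  "shuf_second n Xs S = map (nth Xs) (sorted_list_of_set ({0..<n} - S))"

text \<open>The composition P o Q for P of degree p, Q of degree q (as in the paper;
X_{k+q} is Xs ! (k+q-1) and X_{k+q+1},...,X_{p+q} is drop (k+q) Xs).\<close>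

definition cochain_comp ::
  "nat \<Rightarrow> 'g::ab_group_add cochain \<Rightarrow> nat \<Rightarrow> 'g cochain \<Rightarrow> 'g cochain" where
  "cochain_comp p P q Q Xs x =
     (\<Sum>k\<in>{1..p}. \<Sum>S\<in>shuffles (k-1) q.
        sgn_act ((k-1)*q + shuffle_inv (k-1+q) S)
          (P (shuf_first Xs S @
              [(Q (shuf_second (k-1+q) Xs S) (fst (Xs ! (k-1+q))), snd (Xs ! (k-1+q)))]
              @ drop (k+q) Xs) x))
   + (\<Sum>k\<in>{1..p}. \<Sum>S\<in>shuffles (k-1) q.
        sgn_act ((k-1)*q + shuffle_inv (k-1+q) S)
          (P (shuf_first Xs S @
              [(fst (Xs ! (k-1+q)), Q (shuf_second (k-1+q) Xs S) (snd (Xs ! (k-1+q))))]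
              @ drop (k+q) Xs) x))
   + (\<Sum>S\<in>shuffles p q.
        sgn_act (shuffle_inv (p+q) S)
          (P (shuf_first Xs S) (Q (shuf_second (p+q) Xs S) x)))"

definition lts_bracket ::
  "nat \<Rightarrow> 'g::ab_group_add cochain \<Rightarrow> nat \<Rightarrow> 'g cochain \<Rightarrow> 'g cochain" where
  "lts_bracket p P q Q Xs x =
     cochain_comp p P q Q Xs x - sgn_act (p*q) (cochain_comp q Q p P Xs x)"

definition bracket_cochain :: "('g \<Rightarrow> 'g \<Rightarrow> 'g \<Rightarrow> 'g) \<Rightarrow> 'g cochain" where
  "bracket_cochain T Xs x = T (fst (Xs ! 0)) (snd (Xs ! 0)) x"

definition sum_scale ::
  "('k \<Rightarrow> 'v1 \<Rightarrow> 'v1) \<Rightarrow> ('k \<Rightarrow> 'v2 \<Rightarrow> 'v2) \<Rightarrow> 'k \<Rightarrow> 'v1 \<times> 'v2 \<Rightarrow> 'v1 \<times> 'v2" where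
  "sum_scale s1 s2 c a = (s1 c (fst a), s2 c (snd a))"

definition trilinear ::
  "('k::field \<Rightarrow> 'g::ab_group_add \<Rightarrow> 'g) \<Rightarrow> ('g \<Rightarrow> 'g \<Rightarrow> 'g \<Rightarrow> 'g) \<Rightarrow> bool" where
  "trilinear s T \<longleftrightarrow>
     (\<forall>b c. Vector_Spaces.linear s s (\<lambda>a. T a b c)) \<and>
     (\<forall>a c. Vector_Spaces.linear s s (\<lambda>b. T a b c)) \<and>
     (\<forall>a b. Vector_Spaces.linear s s (\<lambda>c. T a b c))"

definition lie_triple_system :: "('g::ab_group_add \<Rightarrow> 'g \<Rightarrow> 'g \<Rightarrow> 'g) \<Rightarrow> bool" where
  "lie_triple_system T \<longleftrightarrow>
     (\<forall>x y. T x x y = 0) \<and>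
     (\<forall>x y z. T x y z + T y z x + T z x y = 0) \<and>
     (\<forall>x y z w t. T x y (T z w t) = T (T x y z) w t + T z (T x y w) t + T z w (T x y t))"

text \<open>g1 = g1 x {0} and g2 = {0} x g2 are subalgebras of (G, T).\<close>
definition twilled ::
  "('v1::ab_group_add \<times> 'v2::ab_group_add \<Rightarrow> 'v1 \<times> 'v2 \<Rightarrow> 'v1 \<times> 'v2 \<Rightarrow> 'v1 \<times> 'v2) \<Rightarrow> bool" where
  "twilled T \<longleftrightarrow>
     (\<forall>x y z. snd (T (x,0) (y,0) (z,0)) = 0) \<and>
     (\<forall>u v w. fst (T (0,u) (0,v) (0,w)) = 0)"

definition i1 :: "'v1 \<Rightarrow> 'v1 \<times> 'v2::zero" where "i1 x = (x, 0)"
definition i2 :: "'v2 \<Rightarrow> 'v1::zero \<times> 'v2" where "i2 u = (0, u)"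

definition mu1_hat :: "('v1::ab_group_add \<times> 'v2::ab_group_add \<Rightarrow> 'v1 \<times> 'v2 \<Rightarrow> 'v1 \<times> 'v2 \<Rightarrow> 'v1 \<times> 'v2)
    \<Rightarrow> 'v1 \<times> 'v2 \<Rightarrow> 'v1 \<times> 'v2 \<Rightarrow> 'v1 \<times> 'v2 \<Rightarrow> 'v1 \<times> 'v2" where
  "mu1_hat T a b c = (case (a, b, c) of ((x,u),(y,v),(z,w)) \<Rightarrow>
     (fst (T (i1 x) (i1 y) (i1 z)),
      snd (T (i1 x) (i1 y) (i2 w)) + snd (T (i2 u) (i1 y) (i1 z)) - snd (T (i2 v) (i1 x) (i1 z))))"

definition psi_hat :: "('v1::ab_group_add \<times> 'v2::ab_group_add \<Rightarrow> 'v1 \<times> 'v2 \<Rightarrow> 'v1 \<times> 'v2 \<Rightarrow> 'v1 \<times> 'v2)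
    \<Rightarrow> 'v1 \<times> 'v2 \<Rightarrow> 'v1 \<times> 'v2 \<Rightarrow> 'v1 \<times> 'v2 \<Rightarrow> 'v1 \<times> 'v2" where
  "psi_hat T a b c = (case (a, b, c) of ((x,u),(y,v),(z,w)) \<Rightarrow>
     (fst (T (i1 x) (i1 y) (i2 w)) + fst (T (i2 u) (i1 y) (i1 z)) - fst (T (i2 v) (i1 x) (i1 z)),
      snd (T (i2 u) (i2 v) (i1 z)) + snd (T (i1 x) (i2 v) (i2 w)) - snd (T (i1 y) (i2 u) (i2 w))))"

definition mu2_hat :: "('v1::ab_group_add \<times> 'v2::ab_group_add \<Rightarrow> 'v1 \<times> 'v2 \<Rightarrow> 'v1 \<times> 'v2 \<Rightarrow> 'v1 \<times> 'v2)
    \<Rightarrow> 'v1 \<times> 'v2 \<Rightarrow> 'v1 \<times> 'v2 \<Rightarrow> 'v1 \<times> 'v2 \<Rightarrow> 'v1 \<times> 'v2" where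
  "mu2_hat T a b c = (case (a, b, c) of ((x,u),(y,v),(z,w)) \<Rightarrow>
     (fst (T (i2 u) (i2 v) (i1 z)) + fst (T (i1 x) (i2 v) (i2 w)) - fst (T (i1 y) (i2 u) (i2 w)),
      snd (T (i2 u) (i2 v) (i2 w))))"

text \<open>Lift of a cochain f : tensor^(2p+1) g2 -> g1 to G: equals f on tensor^(2p+1) g2 and
vanishes on all other tensor summands; on elementary tensors this is evaluation of f
at the g2-components, placed in g1.\<close>
definition lift ::
  "(('v2 \<times> 'v2) list \<Rightarrow> 'v2 \<Rightarrow> 'v1) \<Rightarrow> ('v1 \<times> 'v2::zero) cochain" where
  "lift f Xs x = (f (map (\<lambda>(a,b). (snd a, snd b)) Xs) (snd x), 0)"

definition lift0 :: "('v2 \<Rightarrow> 'v1) \<Rightarrow> ('v1 \<times> 'v2::zero) cochain" where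
  "lift0 H = lift (\<lambda>_ u. H u)"

definition X_op :: "('v2 \<Rightarrow> 'v1::ab_group_add) \<Rightarrow> ('v1 \<times> 'v2::ab_group_add) cochain
    \<Rightarrow> ('v1 \<times> 'v2) cochain" where
  "X_op H P = lts_bracket 1 P 0 (lift0 H)"

text \<open>Theta^H = sum_{k>=0} 1/k! X_H^k(Theta); the sum is finite, i.e. it is the sum over
k < N where N is the least index from which all X_H^k(Theta) vanish (on degree-1
arguments).\<close>

definition twist_length :: "('v2 \<Rightarrow> 'v1::ab_group_add) \<Rightarrow> ('v1 \<times> 'v2::ab_group_add) cochain \<Rightarrow> nat" where
  "twist_length H Th = (LEAST n. \<forall>m\<ge>n. \<forall>Xs x. length Xs = 1 \<longrightarrow> ((X_op H ^^ m) Th) Xs x = 0)"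

definition twist ::
  "('k::field_char_0 \<Rightarrow> 'v1::ab_group_add \<Rightarrow> 'v1) \<Rightarrow> ('k \<Rightarrow> 'v2::ab_group_add \<Rightarrow> 'v2)
   \<Rightarrow> ('v2 \<Rightarrow> 'v1) \<Rightarrow> ('v1 \<times> 'v2 \<Rightarrow> 'v1 \<times> 'v2 \<Rightarrow> 'v1 \<times> 'v2 \<Rightarrow> 'v1 \<times> 'v2)
   \<Rightarrow> 'v1 \<times> 'v2 \<Rightarrow> 'v1 \<times> 'v2 \<Rightarrow> 'v1 \<times> 'v2 \<Rightarrow> 'v1 \<times> 'v2" where
  "twist s1 s2 H T a b c =
     (let Th = bracket_cochain T in
      (\<Sum>k<twist_length H Th.
          sum_scale s1 s2 (1 / fact k) (((X_op H ^^ k) Th) [(a,b)] c)))"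

definition l1H :: "_ \<Rightarrow> ('v2 \<Rightarrow> 'v1::ab_group_add) \<Rightarrow> ('v1 \<times> 'v2::ab_group_add) cochain" where
  "l1H T H = lts_bracket 1 (bracket_cochain (mu2_hat T)) 0 (lift0 H)"

definition l2HH :: "_ \<Rightarrow> ('v2 \<Rightarrow> 'v1::ab_group_add) \<Rightarrow> ('v1 \<times> 'v2::ab_group_add) cochain" where
  "l2HH T H = lts_bracket 1 (lts_bracket 1 (bracket_cochain (psi_hat T)) 0 (lift0 H)) 0 (lift0 H)"

definition l3HHH :: "_ \<Rightarrow> ('v2 \<Rightarrow> 'v1::ab_group_add) \<Rightarrow> ('v1 \<times> 'v2::ab_group_add) cochain" where
  "l3HHH T H = lts_bracket 1 (lts_bracket 1 (lts_bracket 1 (bracket_cochain (mu1_hat T))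
                 0 (lift0 H)) 0 (lift0 H)) 0 (lift0 H)"

text \<open>H is a Maurer-Cartan element: l_1(H) + 1/2 l_2(H,H) + 1/3! l_3(H,H,H) = 0 as an
element of C^1_LTS(g2,g1), i.e. as a map tensor^3 g2 -> g1 (the values of the l_k are lifts,
identified with their restrictions to g2-arguments with values in g1).\<close>
definition maurer_cartan ::
  "('k::field_char_0 \<Rightarrow> 'v1::ab_group_add \<Rightarrow> 'v1) \<Rightarrow>
   ('v1 \<times> 'v2::ab_group_add \<Rightarrow> 'v1 \<times> 'v2 \<Rightarrow> 'v1 \<times> 'v2 \<Rightarrow> 'v1 \<times> 'v2) \<Rightarrow> ('v2 \<Rightarrow> 'v1) \<Rightarrow> bool" where
  "maurer_cartan s1 T H \<longleftrightarrow>
     (\<forall>u v w.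
        fst (l1H T H [(i2 u, i2 v)] (i2 w))
        + s1 (1/2) (fst (l2HH T H [(i2 u, i2 v)] (i2 w)))
        + s1 (1 / fact 3) (fst (l3HHH T H [(i2 u, i2 v)] (i2 w))) = 0)"

end

theory Submission imports Defs begin

definition hh :: "('v2 \<Rightarrow> 'v1) \<Rightarrow> 'v1 \<times> 'v2 \<Rightarrow> 'v1 \<times> 'v2::zero" where
  "hh H a = (H (snd a), 0)"

definition Dop :: "('v2 \<Rightarrow> 'v1::ab_group_add) \<Rightarrow> ('v1 \<times> 'v2::ab_group_add \<Rightarrow> 'v1 \<times> 'v2 \<Rightarrow> 'v1 \<times> 'v2 \<Rightarrow> 'v1 \<times> 'v2)
   \<Rightarrow> 'v1 \<times> 'v2 \<Rightarrow> 'v1 \<times> 'v2 \<Rightarrow> 'v1 \<times> 'v2 \<Rightarrow> 'v1 \<times> 'v2" where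
  "Dop H f a b c = f (hh H a) b c + f a (hh H b) c + f a b (hh H c) - hh H (f a b c)"

lemma Dop_app: "Dop H f a b c = f (hh H a) b c + f a (hh H b) c + f a b (hh H c) - hh H (f a b c)"
  by (rule Dop_def)

lemma shuffles_0: "shuffles 0 n = {{}}"
  unfolding shuffles_def by (auto simp: card_eq_0_iff dest: finite_subset[OF _ finite_atLeastLessThan])

lemma shuffles_10: "shuffles (Suc 0) 0 = {{0}}"
  unfolding shuffles_def by (auto simp: card_1_singleton_iff)

lemma lb: "lts_bracket 1 P 0 (lift0 H) [(a,b)] c =
   P [(hh H a, b)] c + P [(a, hh H b)] c + P [(a,b)] (hh H c) - hh H (P [(a,b)] c)"
  unfolding lts_bracket_def cochain_comp_def
  by (simp add: shuffles_0 shuffles_10 shuffle_inv_def sgn_act_def shuf_first_def shuf_second_def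
       lift0_def lift_def hh_def)

lemma funpow_X: "(X_op H ^^ k) (bracket_cochain T) [(a,b)] c = (Dop H ^^ k) T a b c"
proof (induction k arbitrary: a b c)
  case 0 then show ?case by (simp add: bracket_cochain_def)
next
  case (Suc k) then show ?case by (simp only: funpow.simps o_apply X_op_def lb Suc.IH Dop_app)
qed


lemma pz[simp]: "((0::'a::zero), (0::'b::zero)) = 0"
  by (simp add: zero_prod_def)

lemma hh_add: fixes H :: "'v2::ab_group_add \<Rightarrow> 'v1::ab_group_add" assumes "\<And>x y. H (x + y) = H x + H y" shows "hh H (x + y) = hh H x + hh H y"
  using assms by (simp add: hh_def)

lemma hh_diff: fixes H :: "'v2::ab_group_add \<Rightarrow> 'v1::ab_group_add" assumes "\<And>x y. H (x - y) = H x - H y" shows "hh H (x - y) = hh H x - hh H y"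
  using assms by (simp add: hh_def)

lemma hh_zero: fixes H :: "'v2::ab_group_add \<Rightarrow> 'v1::ab_group_add" assumes "H 0 = 0" shows "hh H 0 = 0"
  using assms by (simp add: hh_def)

lemma hh_hh: fixes H :: "'v2::ab_group_add \<Rightarrow> 'v1::ab_group_add" assumes "H 0 = 0" shows "hh H (hh H x) = 0"
  using assms by (simp add: hh_def)

lemma hpow: fixes H :: "'v2::ab_group_add \<Rightarrow> 'v1::ab_group_add" assumes "H 0 = 0"
  shows "(hh H ^^ n) x = (if n = 0 then x else if n = 1 then hh H x else 0)"
proof (induction n)
  case 0 then show ?case by simp
next
  case (Suc n) then show ?case using hh_hh[of H, OF assms] hh_zero[of H, OF assms] by auto
qed

lemma hpow_add: fixes H :: "'v2::ab_group_add \<Rightarrow> 'v1::ab_group_add"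
  assumes "H 0 = 0" "\<And>x y. H (x + y) = H x + H y"
  shows "(hh H ^^ n) (x + y) = (hh H ^^ n) x + (hh H ^^ n) y"
  using hh_add[of H, OF assms(2)] by (simp add: hpow[of H, OF assms(1)])

lemma hpow_diff: fixes H :: "'v2::ab_group_add \<Rightarrow> 'v1::ab_group_add"
  assumes "H 0 = 0" "\<And>x y. H (x - y) = H x - H y"
  shows "(hh H ^^ n) (x - y) = (hh H ^^ n) x - (hh H ^^ n) y"
  using hh_diff[of H, OF assms(2)] by (simp add: hpow[of H, OF assms(1)])

lemma hpow_Suc: "hh H ((hh H ^^ n) x) = (hh H ^^ Suc n) x"
  by simp

lemma nil: fixes H :: "'v2::ab_group_add \<Rightarrow> 'v1::ab_group_add"
  assumes H0: "H 0 = 0" and Hadd: "\<And>x y. H (x + y) = H x + H y"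
    and Hdiff: "\<And>x y. H (x - y) = H x - H y"
    and T0: "\<And>b c. T 0 b c = 0" "\<And>a c. T a 0 c = 0" "\<And>a b. T a b 0 = 0"
  shows "ra + rb + rc + s + k \<ge> 5 \<Longrightarrow>
    (hh H ^^ s) ((Dop H ^^ k) T ((hh H ^^ ra) a) ((hh H ^^ rb) b) ((hh H ^^ rc) c)) = 0"
proof (induction k arbitrary: ra rb rc s)
  case 0
  then have "ra \<ge> 2 \<or> rb \<ge> 2 \<or> rc \<ge> 2 \<or> s \<ge> 2" by linarith
  then show ?case
    using T0 hh_zero[of H, OF H0] by (auto simp: hpow[of H, OF H0])
next
  case (Suc k)
  have e: "(hh H ^^ s) ((Dop H ^^ Suc k) T ((hh H ^^ ra) a) ((hh H ^^ rb) b) ((hh H ^^ rc) c))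
    = (hh H ^^ s) ((Dop H ^^ k) T ((hh H ^^ Suc ra) a) ((hh H ^^ rb) b) ((hh H ^^ rc) c))
    + (hh H ^^ s) ((Dop H ^^ k) T ((hh H ^^ ra) a) ((hh H ^^ Suc rb) b) ((hh H ^^ rc) c))
    + (hh H ^^ s) ((Dop H ^^ k) T ((hh H ^^ ra) a) ((hh H ^^ rb) b) ((hh H ^^ Suc rc) c))
    - (hh H ^^ Suc s) ((Dop H ^^ k) T ((hh H ^^ ra) a) ((hh H ^^ rb) b) ((hh H ^^ rc) c))"
    by (simp only: funpow.simps(2) o_apply Dop_app hpow_add[of H, OF H0 Hadd] hpow_diff[of H, OF H0 Hdiff])
      (simp only: funpow_swap1[of "hh H"])
  show ?case unfolding e
    using Suc.IH[of "Suc ra" rb rc s] Suc.IH[of ra "Suc rb" rc s] Suc.IH[of ra rb "Suc rc" s]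
      Suc.IH[of ra rb rc "Suc s"] Suc.prems by simp
qed

lemma deg: fixes H :: "'v2::ab_group_add \<Rightarrow> 'v1::ab_group_add"
  assumes H0: "H 0 = 0" and Hadd: "\<And>x y. H (x + y) = H x + H y"
    and Hdiff: "\<And>x y. H (x - y) = H x - H y"
    and base: "\<And>ra rb rc s u v w. ra + rb + rc + s \<noteq> d \<Longrightarrow>
      fst ((hh H ^^ s) (mu ((hh H ^^ ra) (0,u)) ((hh H ^^ rb) (0,v)) ((hh H ^^ rc) (0,w)))) = 0"
  shows "ra + rb + rc + s + k \<noteq> d \<Longrightarrow>
    fst ((hh H ^^ s) ((Dop H ^^ k) mu ((hh H ^^ ra) (0,u)) ((hh H ^^ rb) (0,v)) ((hh H ^^ rc) (0,w)))) = 0"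
proof (induction k arbitrary: ra rb rc s)
  case 0
  then show ?case using base by simp
next
  case (Suc k)
  let ?a = "(0,u)" and ?b = "(0,v)" and ?c = "(0,w)"
  have e: "(hh H ^^ s) ((Dop H ^^ Suc k) mu ((hh H ^^ ra) ?a) ((hh H ^^ rb) ?b) ((hh H ^^ rc) ?c))
    = (hh H ^^ s) ((Dop H ^^ k) mu ((hh H ^^ Suc ra) ?a) ((hh H ^^ rb) ?b) ((hh H ^^ rc) ?c))
    + (hh H ^^ s) ((Dop H ^^ k) mu ((hh H ^^ ra) ?a) ((hh H ^^ Suc rb) ?b) ((hh H ^^ rc) ?c))
    + (hh H ^^ s) ((Dop H ^^ k) mu ((hh H ^^ ra) ?a) ((hh H ^^ rb) ?b) ((hh H ^^ Suc rc) ?c))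
    - (hh H ^^ Suc s) ((Dop H ^^ k) mu ((hh H ^^ ra) ?a) ((hh H ^^ rb) ?b) ((hh H ^^ rc) ?c))"
    by (simp only: funpow.simps(2) o_apply Dop_app hpow_add[of H, OF H0 Hadd] hpow_diff[of H, OF H0 Hdiff])
      (simp only: funpow_swap1[of "hh H"])
  show ?case unfolding e
    using Suc.IH[of "Suc ra" rb rc s] Suc.IH[of ra "Suc rb" rc s] Suc.IH[of ra rb "Suc rc" s]
      Suc.IH[of ra rb rc "Suc s"] Suc.prems by simp
qed


lemma mu1_alt: "mu1_hat T a b c =
     (fst (T (i1 (fst a)) (i1 (fst b)) (i1 (fst c))),
      snd (T (i1 (fst a)) (i1 (fst b)) (i2 (snd c))) + snd (T (i2 (snd a)) (i1 (fst b)) (i1 (fst c)))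
      - snd (T (i2 (snd b)) (i1 (fst a)) (i1 (fst c))))"
  by (cases a; cases b; cases c) (simp add: mu1_hat_def)

lemma psi_alt: "psi_hat T a b c =
     (fst (T (i1 (fst a)) (i1 (fst b)) (i2 (snd c))) + fst (T (i2 (snd a)) (i1 (fst b)) (i1 (fst c)))
      - fst (T (i2 (snd b)) (i1 (fst a)) (i1 (fst c))),
      snd (T (i2 (snd a)) (i2 (snd b)) (i1 (fst c))) + snd (T (i1 (fst a)) (i2 (snd b)) (i2 (snd c)))
      - snd (T (i1 (fst b)) (i2 (snd a)) (i2 (snd c))))"
  by (cases a; cases b; cases c) (simp add: psi_hat_def)

lemma mu2_alt: "mu2_hat T a b c =
     (fst (T (i2 (snd a)) (i2 (snd b)) (i1 (fst c))) + fst (T (i1 (fst a)) (i2 (snd b)) (i2 (snd c)))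
      - fst (T (i1 (fst b)) (i2 (snd a)) (i2 (snd c))),
      snd (T (i2 (snd a)) (i2 (snd b)) (i2 (snd c))))"
  by (cases a; cases b; cases c) (simp add: mu2_hat_def)

lemma base_mu2: fixes H :: "'v2::ab_group_add \<Rightarrow> 'v1::ab_group_add"
  assumes H0: "H 0 = 0"
    and T0: "\<And>b c. T 0 b c = 0" "\<And>a c. T a 0 c = 0" "\<And>a b. T a b 0 = 0"
  shows "ra + rb + rc + s \<noteq> 1 \<Longrightarrow>
    fst ((hh H ^^ s) (mu2_hat T ((hh H ^^ ra) (0,u)) ((hh H ^^ rb) (0,v)) ((hh H ^^ rc) (0,w)))) = 0"
  by (cases "ra=0"; cases "ra=1"; cases "rb=0"; cases "rb=1"; cases "rc=0"; cases "rc=1";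
      cases "s=0"; cases "s=1"; simp add: hpow[of H, OF H0] hh_def mu2_alt i1_def i2_def H0 T0)

lemma base_psi: fixes H :: "'v2::ab_group_add \<Rightarrow> 'v1::ab_group_add"
  assumes H0: "H 0 = 0"
    and T0: "\<And>b c. T 0 b c = 0" "\<And>a c. T a 0 c = 0" "\<And>a b. T a b 0 = 0"
  shows "ra + rb + rc + s \<noteq> 2 \<Longrightarrow>
    fst ((hh H ^^ s) (psi_hat T ((hh H ^^ ra) (0,u)) ((hh H ^^ rb) (0,v)) ((hh H ^^ rc) (0,w)))) = 0"
  by (cases "ra=0"; cases "ra=1"; cases "rb=0"; cases "rb=1"; cases "rc=0"; cases "rc=1";
      cases "s=0"; cases "s=1"; simp add: hpow[of H, OF H0] hh_def psi_alt i1_def i2_def H0 T0)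

lemma base_mu1: fixes H :: "'v2::ab_group_add \<Rightarrow> 'v1::ab_group_add"
  assumes H0: "H 0 = 0"
    and T0: "\<And>b c. T 0 b c = 0" "\<And>a c. T a 0 c = 0" "\<And>a b. T a b 0 = 0"
  shows "ra + rb + rc + s \<noteq> 3 \<Longrightarrow>
    fst ((hh H ^^ s) (mu1_hat T ((hh H ^^ ra) (0,u)) ((hh H ^^ rb) (0,v)) ((hh H ^^ rc) (0,w)))) = 0"
  by (cases "ra=0"; cases "ra=1"; cases "rb=0"; cases "rb=1"; cases "rc=0"; cases "rc=1";
      cases "s=0"; cases "s=1"; simp add: hpow[of H, OF H0] hh_def mu1_alt i1_def i2_def H0 T0)


definition addf :: "('a \<Rightarrow> 'a \<Rightarrow> 'a \<Rightarrow> 'a::plus) \<Rightarrow> ('a \<Rightarrow> 'a \<Rightarrow> 'a \<Rightarrow> 'a) \<Rightarrow> 'a \<Rightarrow> 'a \<Rightarrow> 'a \<Rightarrow> 'a"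
  where "addf f g = (\<lambda>a b c. f a b c + g a b c)"

lemma Dop_addf: fixes H :: "'v2::ab_group_add \<Rightarrow> 'v1::ab_group_add"
  assumes Hadd: "\<And>x y. H (x + y) = H x + H y" and Hdiff: "\<And>x y. H (x - y) = H x - H y"
  shows "Dop H (addf f g) = addf (Dop H f) (Dop H g)"
  by (simp add: fun_eq_iff addf_def Dop_app hh_add[of H, OF Hadd] algebra_simps)

lemma Dopk_addf: fixes H :: "'v2::ab_group_add \<Rightarrow> 'v1::ab_group_add"
  assumes Hadd: "\<And>x y. H (x + y) = H x + H y" and Hdiff: "\<And>x y. H (x - y) = H x - H y"
  shows "(Dop H ^^ k) (addf f g) = addf ((Dop H ^^ k) f) ((Dop H ^^ k) g)"
  by (induction k) (simp_all add: Dop_addf[of H, OF Hadd Hdiff])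

lemma Dopk_zero: fixes H :: "'v2::ab_group_add \<Rightarrow> 'v1::ab_group_add"
  assumes H0: "H 0 = 0"
    and T0: "\<And>b c. T 0 b c = 0" "\<And>a c. T a 0 c = 0" "\<And>a b. T a b 0 = 0"
  shows "(Dop H ^^ k) T 0 b c = 0 \<and> (Dop H ^^ k) T a 0 c = 0 \<and> (Dop H ^^ k) T a b 0 = 0"
proof (induction k arbitrary: a b c)
  case 0 then show ?case using T0 by simp
next
  case (Suc k) then show ?case using hh_zero[of H, OF H0] by (simp add: Dop_app)
qed

lemma cond1: fixes H :: "'v2::ab_group_add \<Rightarrow> 'v1::ab_group_add"
  assumes H0: "H 0 = 0"
    and T0: "\<And>b c. T 0 b c = 0" "\<And>a c. T a 0 c = 0" "\<And>a b. T a b 0 = 0"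
    and tw: "\<And>x y z. snd (T (x,0) (y,0) (z,0)) = 0"
  shows "snd ((Dop H ^^ k) T (x,0) (y,0) (z,0)) = 0"
proof (cases k)
  case 0 then show ?thesis using tw by simp
next
  case (Suc j)
  have "hh H (x,0) = 0" for x using H0 by (simp add: hh_def)
  then show ?thesis using Suc Dopk_zero[of H T j, OF H0 T0] by (simp add: Dop_app hh_def)
qed

lemma lbD: "(\<And>a b c. P [(a,b)] c = f a b c) \<Longrightarrow> lts_bracket 1 P 0 (lift0 H) [(a,b)] c = Dop H f a b c"
  by (simp only: lb Dop_app)


theorem theorem4p6:
  fixes s1 :: "'k::field_char_0 \<Rightarrow> 'v1::ab_group_add \<Rightarrow> 'v1"
    and s2 :: "'k \<Rightarrow> 'v2::ab_group_add \<Rightarrow> 'v2"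
    and T :: "'v1 \<times> 'v2 \<Rightarrow> 'v1 \<times> 'v2 \<Rightarrow> 'v1 \<times> 'v2 \<Rightarrow> 'v1 \<times> 'v2"
    and H :: "'v2 \<Rightarrow> 'v1"
  assumes "vector_space s1" and "vector_space s2"
    and "trilinear (sum_scale s1 s2) T"
    and "lie_triple_system T"
    and "twilled T"
    and "Vector_Spaces.linear s2 s1 H"
  shows "twilled (twist s1 s2 H T) \<longleftrightarrow> maurer_cartan s1 T H"
proof -
  note vs1 = assms(1)[unfolded module_iff_vector_space[symmetric]]
  note vs2 = assms(2)[unfolded module_iff_vector_space[symmetric]]
  have Hm: "module_hom s2 s1 H" using assms(6) by (simp add: linear_iff_module_hom)
  have H0: "H 0 = 0" using module_hom.zero[OF Hm] .
  have Hadd: "\<And>x y. H (x + y) = H x + H y" using module_hom.add[OF Hm] .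
  have Hdiff: "\<And>x y. H (x - y) = H x - H y" using module_hom.diff[OF Hm] .
  have L1: "module_hom (sum_scale s1 s2) (sum_scale s1 s2) (\<lambda>a. T a b c)" for b c
    using assms(3) unfolding trilinear_def linear_iff_module_hom by blast
  have L2: "module_hom (sum_scale s1 s2) (sum_scale s1 s2) (\<lambda>b. T a b c)" for a c
    using assms(3) unfolding trilinear_def linear_iff_module_hom by blast
  have L3: "module_hom (sum_scale s1 s2) (sum_scale s1 s2) (\<lambda>c. T a b c)" for a b
    using assms(3) unfolding trilinear_def linear_iff_module_hom by blast
  have Ta1: "T (a + a') b c = T a b c + T a' b c" for a a' b c
    using module_hom.add[OF L1[of b c]] by simp
  have Ta2: "T a (b + b') c = T a b c + T a b' c" for a b b' c
    using module_hom.add[OF L2[of a c]] by simp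
  have Ta3: "T a b (c + c') = T a b c + T a b c'" for a b c c'
    using module_hom.add[OF L3[of a b]] by simp
  have T01: "\<And>b c. T 0 b c = 0" using module_hom.zero[OF L1] by simp
  have T02: "\<And>a c. T a 0 c = 0" using module_hom.zero[OF L2] by simp
  have T03: "\<And>a b. T a b 0 = 0" using module_hom.zero[OF L3] by simp
  note T0 = T01 T02 T03
  have skew: "T b a c = - T a b c" for a b c
  proof -
    have xx: "\<And>x y. T x x y = 0" using assms(4) unfolding lie_triple_system_def by blast
    have "T (a + b) (a + b) c = 0" by (rule xx)
    moreover have "T a a c = 0" "T b b c = 0" by (rule xx)+
    ultimately have "T a b c + T b a c = 0" by (simp add: Ta1 Ta2 add.commute)
    then show ?thesis by (simp add: eq_neg_iff_add_eq_0 add.commute)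
  qed
  have tw1: "\<And>x y z. snd (T (x,0) (y,0) (z,0)) = 0"
    and tw2: "\<And>u v w. fst (T (0,u) (0,v) (0,w)) = 0"
    using assms(5) by (auto simp: twilled_def)
  have Tdec: "T = addf (addf (mu1_hat T) (psi_hat T)) (mu2_hat T)"
  proof (intro ext)
    fix a b c :: "'v1 \<times> 'v2"
    have ea: "a = i1 (fst a) + i2 (snd a)" for a :: "'v1 \<times> 'v2" by (simp add: i1_def i2_def)
    have "T a b c = T (i1 (fst a) + i2 (snd a)) (i1 (fst b) + i2 (snd b)) (i1 (fst c) + i2 (snd c))"
      by (simp add: i1_def i2_def)
    also have "\<dots> = T (i1 (fst a)) (i1 (fst b)) (i1 (fst c)) + T (i1 (fst a)) (i1 (fst b)) (i2 (snd c))
       + T (i1 (fst a)) (i2 (snd b)) (i1 (fst c)) + T (i1 (fst a)) (i2 (snd b)) (i2 (snd c))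
       + T (i2 (snd a)) (i1 (fst b)) (i1 (fst c)) + T (i2 (snd a)) (i1 (fst b)) (i2 (snd c))
       + T (i2 (snd a)) (i2 (snd b)) (i1 (fst c)) + T (i2 (snd a)) (i2 (snd b)) (i2 (snd c))"
      by (simp add: Ta1 Ta2 Ta3 algebra_simps)
    also have "\<dots> = addf (addf (mu1_hat T) (psi_hat T)) (mu2_hat T) a b c"
      using skew[of "i1 (fst a)" "i2 (snd b)" "i1 (fst c)"] skew[of "i2 (snd a)" "i1 (fst b)" "i2 (snd c)"]
        tw1[of "fst a" "fst b" "fst c"] tw2[of "snd a" "snd b" "snd c"]
      by (simp add: addf_def mu1_alt psi_alt mu2_alt prod_eq_iff i1_def i2_def algebra_simps)
    finally show "T a b c = addf (addf (mu1_hat T) (psi_hat T)) (mu2_hat T) a b c" .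
  qed
  have vanish: "(Dop H ^^ m) T a b c = 0" if "m \<ge> 5" for m a b c
    using nil[of H T 0 0 0 0 m a b c, OF H0 Hadd Hdiff T0] that by simp
  have twist_eq: "twist s1 s2 H T a b c = (\<Sum>k<5. sum_scale s1 s2 (1 / fact k) ((Dop H ^^ k) T a b c))"
    for a b c
  proof -
    let ?P = "\<lambda>n. \<forall>m\<ge>n. \<forall>Xs x. length Xs = 1 \<longrightarrow> ((X_op H ^^ m) (bracket_cochain T)) Xs x = 0"
    have P5: "?P 5"
    proof (intro allI impI)
      fix m :: nat and Xs :: "(('v1 \<times> 'v2) \<times> ('v1 \<times> 'v2)) list" and x :: "'v1 \<times> 'v2"
      assume "5 \<le> m" "length Xs = (1::nat)"
      then obtain a b where "Xs = [(a,b)]" by (cases Xs) auto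
      then show "((X_op H ^^ m) (bracket_cochain T)) Xs x = 0"
        using funpow_X[of m H T a b x] vanish[of m a b x] \<open>5 \<le> m\<close> by simp
    qed
    define N where "N = twist_length H (bracket_cochain T)"
    have N: "N = (LEAST n. ?P n)" unfolding N_def twist_length_def ..
    have N5: "N \<le> 5" unfolding N by (rule Least_le) (rule P5)
    have PN: "?P N" unfolding N by (rule LeastI) (rule P5)
    have z: "sum_scale s1 s2 (1 / fact k) ((Dop H ^^ k) T a b c) = 0" if "k \<in> {..<5} - {..<N}" for k
    proof -
      have "N \<le> k" using that by auto
      then have "(X_op H ^^ k) (bracket_cochain T) [(a,b)] c = 0"
        using PN[rule_format, of k "[(a,b)]" c] by simp
      then have "(Dop H ^^ k) T a b c = 0" using funpow_X[of k H T a b c] by simp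
      then show ?thesis
        by (simp add: sum_scale_def module.scale_zero_right[OF vs1] module.scale_zero_right[OF vs2])
    qed
    have "twist s1 s2 H T a b c = (\<Sum>k<N. sum_scale s1 s2 (1 / fact k) ((Dop H ^^ k) T a b c))"
      unfolding twist_def Let_def N_def[symmetric] funpow_X ..
    also have "\<dots> = (\<Sum>k<5. sum_scale s1 s2 (1 / fact k) ((Dop H ^^ k) T a b c))"
      by (rule sum.mono_neutral_left) (use N5 z in auto)
    finally show ?thesis .
  qed
  have c1: "snd (twist s1 s2 H T (x,0) (y,0) (z,0)) = 0" for x y z
    unfolding twist_eq snd_sum
    by (simp add: sum_scale_def cond1[of H T, OF H0 T0 tw1] module.scale_zero_right[OF vs2])
  have Dmu1: "fst ((Dop H ^^ k) (mu1_hat T) (0,u) (0,v) (0,w)) = 0" if "k \<noteq> 3" for k u v w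
    using deg[of H 3 "mu1_hat T" 0 0 0 0 k u v w, OF H0 Hadd Hdiff base_mu1[of H T, OF H0 T0]] that
    by simp
  have Dpsi: "fst ((Dop H ^^ k) (psi_hat T) (0,u) (0,v) (0,w)) = 0" if "k \<noteq> 2" for k u v w
    using deg[of H 2 "psi_hat T" 0 0 0 0 k u v w, OF H0 Hadd Hdiff base_psi[of H T, OF H0 T0]] that
    by simp
  have Dmu2: "fst ((Dop H ^^ k) (mu2_hat T) (0,u) (0,v) (0,w)) = 0" if "k \<noteq> 1" for k u v w
    using deg[of H 1 "mu2_hat T" 0 0 0 0 k u v w, OF H0 Hadd Hdiff base_mu2[of H T, OF H0 T0]] that
    by simp
  have fstT: "fst ((Dop H ^^ k) T a b c) = fst ((Dop H ^^ k) (mu1_hat T) a b c)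
      + fst ((Dop H ^^ k) (psi_hat T) a b c) + fst ((Dop H ^^ k) (mu2_hat T) a b c)" for k a b c
    by (subst Tdec, simp only: Dopk_addf[of H, OF Hadd Hdiff], simp add: addf_def)
  have five: "{..<5::nat} = {0,1,2,3,4}" by auto
  have c2: "fst (twist s1 s2 H T (0,u) (0,v) (0,w)) =
      fst ((Dop H ^^ 1) (mu2_hat T) (0,u) (0,v) (0,w))
      + s1 (1/2) (fst ((Dop H ^^ 2) (psi_hat T) (0,u) (0,v) (0,w)))
      + s1 (1 / fact 3) (fst ((Dop H ^^ 3) (mu1_hat T) (0,u) (0,v) (0,w)))" for u v w
    unfolding twist_eq fst_sum five
    using Dmu1[of 0 u v w] Dmu1[of 1 u v w] Dpsi[of 0 u v w] Dpsi[of 1 u v w] Dmu2[of 0 u v w]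
    by (simp add: sum_scale_def fstT Dmu1 Dpsi Dmu2 module.scale_zero_right[OF vs1] module.scale_one[OF vs1])
  have l1: "l1H T H [(a,b)] c = Dop H (mu2_hat T) a b c" for a b c
    unfolding l1H_def by (rule lbD) (simp add: bracket_cochain_def)
  have l2: "l2HH T H [(a,b)] c = Dop H (Dop H (psi_hat T)) a b c" for a b c
    unfolding l2HH_def by (rule lbD, rule lbD) (simp add: bracket_cochain_def)
  have l3: "l3HHH T H [(a,b)] c = Dop H (Dop H (Dop H (mu1_hat T))) a b c" for a b c
    unfolding l3HHH_def by (rule lbD, rule lbD, rule lbD) (simp add: bracket_cochain_def)
  have mc: "maurer_cartan s1 T H \<longleftrightarrow> (\<forall>u v w. fst (twist s1 s2 H T (0,u) (0,v) (0,w)) = 0)"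
    unfolding maurer_cartan_def c2 l1 l2 l3
    by (simp add: i2_def numeral_2_eq_2 numeral_3_eq_3)
  show ?thesis
    unfolding mc twilled_def using c1 by simp
qed

end
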